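(* Let $m\geq 2$, $\lambda\in\{1,\dots,m\}$, let $\rho:[0,1]\to[0,1]$ be continuous and nondecreasing, and let the threshold collection be $t_k=\rho(k/m)$, $1\le k\le m$ (with $t_0=0$). For any realization $p_1,\dots,p_m\in[0,1]$ of the $p$-values, let $\hat k$ be the step-up-down index of order $\lambda$ defined below, and let $\hat{\mathbb{G}}_m(x)=m^{-1}\sum_{i=1}^m \mathbf{1}\{p_i\le x\}$ be the empirical c.d.f. of the $p$-values. Then $$\mathcal{U}(\lambda/m,\hat{\mathbb{G}}_m)\;\le\; \hat k/m\;\le\;\mathcal{U}\big(\lambda/m,(\hat{\mathbb{G}}_m+m^{-1})\wedge 1\big).$$
   Context: Step-up-down index: order the $p$-values $p_{(1)}\le\dots\le p_{(m)}$ with $p_{(0)}=0$, $t_0=0$. Then $\hat k=\max\{k\in\{\lambda,\dots,m\}: \forall k'\in\{\lambda,\dots,k\},\ p_{(k')}\le t_{k'}\}$ if $p_{(\lambda)}\le t_\lambda$, and $\hat k=\max\{k\in\{0,\dots,\lambda\}: p_{(k)}\le t_k\}$ if $p_{(\lambda)}>t_\lambda$. The step-up-down procedure $\mathrm{SUD}_\lambda(\mathbf t)$ rejects hypothesis $i$ iff $p_i\le t_{\hat k}$. For a nondecreasing $G:[0,1]\to[0,1]$ and $\tau\in[0,1]$, define $\mathcal{U}(\tau,G)=\min\{u\in[\tau,1]: G(\rho(u))\le u\}$ if $G(\rho(\tau))\ge\tau$, and $\mathcal{U}(\tau,G)=\max\{u\in[0,\tau]: G(\rho(u))\ge u\}$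 if $G(\rho(\tau))<\tau$. *)

theory Defs
  imports Complex_Main
begin

text \<open>p-values are indexed by 1..m. Order statistic p_(k), with p_(0) = 0.\<close>
definition pord :: "(nat \<Rightarrow> real) \<Rightarrow> nat \<Rightarrow> nat \<Rightarrow> real" where
  "pord p m k = (if k = 0 then 0 else sort (map p [1..<m+1]) ! (k - 1))"

definition thr :: "(real \<Rightarrow> real) \<Rightarrow> nat \<Rightarrow> nat \<Rightarrow> real" where
  "thr \<rho> m k = (if k = 0 then 0 else \<rho> (real k / real m))"

definition khat :: "(real \<Rightarrow> real) \<Rightarrow> nat \<Rightarrow> nat \<Rightarrow> (nat \<Rightarrow> real) \<Rightarrow> nat" where
  "khat \<rho> m lam p =
     (if pord p m lam \<le> thr \<rho> m lam
      then Max {k \<in> {lam..m}. \<forall>k'\<in>{lam..k}. pord p m k' \<le> thr \<rho> m k'}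
      else Max {k \<in> {0..lam}. pord p m k \<le> thr \<rho> m k})"

definition ecdf :: "nat \<Rightarrow> (nat \<Rightarrow> real) \<Rightarrow> real \<Rightarrow> real" where
  "ecdf m p x = real (card {i \<in> {1..m}. p i \<le> x}) / real m"

text \<open>The functional U(tau, G); min/max rendered as Inf/Sup (they are attained).\<close>
definition Ufun :: "(real \<Rightarrow> real) \<Rightarrow> real \<Rightarrow> (real \<Rightarrow> real) \<Rightarrow> real" where
  "Ufun \<rho> \<tau> G =
     (if G (\<rho> \<tau>) \<ge> \<tau>
      then Inf {u \<in> {\<tau>..1}. G (\<rho> u) \<le> u}
      else Sup {u \<in> {0..\<tau>}. G (\<rho> u) \<ge> u})"

end

theory Submission
  imports Defs
begin

lemma pord_le_iff:
  assumes "1 \<le> k" "k \<le> m"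
  shows "pord p m k \<le> x \<longleftrightarrow> k \<le> card {i\<in>{1..m}. p i \<le> x}"
proof -
  define xs where "xs = sort (map p [1..<m+1])"
  have len: "length xs = m" by (simp add: xs_def)
  have srt: "sorted xs" by (simp add: xs_def)
  have "length (filter (\<lambda>y. y \<le> x) xs) = length (filter (\<lambda>y. y \<le> x) (map p [1..<m+1]))"
    unfolding xs_def by (simp add: filter_sort)
  also have "\<dots> = length (filter (\<lambda>i. p i \<le> x) [1..<m+1])"
    by (simp add: filter_map o_def)
  also have "\<dots> = card (set (filter (\<lambda>i. p i \<le> x) [1..<m+1]))"
    by (rule distinct_card[symmetric]) simp
  also have "set (filter (\<lambda>i. p i \<le> x) [1..<m+1]) = {i\<in>{1..m}. p i \<le> x}" by auto
  finally have cnt: "card {j. j < m \<and> xs!j \<le> x} = card {i\<in>{1..m}. p i \<le> x}"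
    by (simp add: length_filter_conv_card len)
  have pk: "pord p m k = xs ! (k-1)" using assms by (simp add: pord_def xs_def)
  show ?thesis
  proof
    assume h: "pord p m k \<le> x"
    have "{0..<k} \<subseteq> {j. j < m \<and> xs!j \<le> x}"
    proof
      fix j assume "j \<in> {0..<k}"
      then have "j \<le> k - 1" "k - 1 < length xs" using assms len by auto
      then have "xs ! j \<le> xs ! (k-1)" using srt by (simp add: sorted_nth_mono)
      then show "j \<in> {j. j < m \<and> xs!j \<le> x}" using h pk \<open>j \<in> {0..<k}\<close> assms by auto
    qed
    then have "card {0..<k} \<le> card {j. j < m \<and> xs!j \<le> x}" by (intro card_mono) auto
    then show "k \<le> card {i\<in>{1..m}. p i \<le> x}" using cnt by simp
  next
    assume h: "k \<le> card {i\<in>{1..m}. p i \<le> x}"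
    show "pord p m k \<le> x"
    proof (rule ccontr)
      assume "\<not> pord p m k \<le> x"
      then have gt: "xs ! (k-1) > x" using pk by simp
      have "{j. j < m \<and> xs!j \<le> x} \<subseteq> {0..<k-1}"
      proof
        fix j assume j: "j \<in> {j. j < m \<and> xs!j \<le> x}"
        show "j \<in> {0..<k-1}"
        proof (rule ccontr)
          assume "j \<notin> {0..<k-1}"
          then have "k - 1 \<le> j" by auto
          then have "xs ! (k-1) \<le> xs ! j" using srt j len by (simp add: sorted_nth_mono)
          then show False using j gt by auto
        qed
      qed
      then have "card {j. j < m \<and> xs!j \<le> x} \<le> k - 1"
        by (metis card_atLeastLessThan card_mono finite_atLeastLessThan diff_zero)
      then show False using h cnt assms by linarith
    qed
  qed
qed

theorem lemma4p1:
  fixes m lam :: nat and \<rho> :: "real \<Rightarrow> real" and p :: "nat \<Rightarrow> real"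
  assumes "m \<ge> 2"
    and "1 \<le> lam" and "lam \<le> m"
    and "continuous_on {0..1} \<rho>"
    and "mono_on {0..1} \<rho>"
    and "\<rho> ` {0..1} \<subseteq> {0..1}"
    and "\<forall>i\<in>{1..m}. 0 \<le> p i \<and> p i \<le> 1"
  shows "Ufun \<rho> (real lam / real m) (ecdf m p) \<le> real (khat \<rho> m lam p) / real m
       \<and> real (khat \<rho> m lam p) / real m
           \<le> Ufun \<rho> (real lam / real m) (\<lambda>x. min (ecdf m p x + 1 / real m) 1)"
proof -
  define c where "c = (\<lambda>y. card {i\<in>{1..m}. p i \<le> y})"
  define G where "G = ecdf m p"
  define H where "H = (\<lambda>x. min (G x + 1 / real m) 1)"
  define \<tau> where "\<tau> = real lam / real m"
  define A where "A = (\<lambda>k. pord p m k \<le> thr \<rho> m k)"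
  define K where "K = khat \<rho> m lam p"
  have mpos: "real m > 0" using assms(1) by simp
  have Gc: "G y = real (c y) / real m" for y by (simp add: G_def c_def ecdf_def)
  have cle: "c y \<le> m" for y
  proof -
    have "c y \<le> card {1..m}" unfolding c_def by (intro card_mono) auto
    then show ?thesis by simp
  qed
  have G1: "G y \<le> 1" for y using cle[of y] mpos by (simp add: Gc divide_simps)
  have G0: "G y \<ge> 0" for y by (simp add: Gc)
  have cmono: "x \<le> y \<Longrightarrow> c x \<le> c y" for x y unfolding c_def by (intro card_mono) auto
  have rmono: "0 \<le> u \<Longrightarrow> u \<le> v \<Longrightarrow> v \<le> 1 \<Longrightarrow> \<rho> u \<le> \<rho> v" for u v
    using assms(5) by (auto intro: mono_onD)
  have gmono: "0 \<le> u \<Longrightarrow> u \<le> v \<Longrightarrow> v \<le> 1 \<Longrightarrow> c (\<rho> u) \<le> c (\<rho> v)" for u v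
    using rmono cmono by blast
  have A_iff: "1 \<le> k \<Longrightarrow> k \<le> m \<Longrightarrow> A k \<longleftrightarrow> k \<le> c (\<rho> (real k / real m))" for k
    unfolding A_def thr_def c_def using pord_le_iff by simp
  have A0: "A 0" by (simp add: A_def pord_def thr_def)
  have nat_lt: "real a < real b + 1 \<Longrightarrow> a \<le> b" for a b :: nat
  proof -
    assume "real a < real b + 1"
    then have "real a < real (b+1)" by simp
    then show "a \<le> b" by (simp only: of_nat_less_iff)
  qed
  have \<tau>le: "\<tau> \<le> 1" "\<tau> \<ge> 0" using assms(3) mpos by (auto simp: \<tau>_def divide_simps)
  show ?thesis
  proof (cases "A lam")
    case True
    define S where "S = {k \<in> {lam..m}. \<forall>k'\<in>{lam..k}. A k'}"
    have KS: "K = Max S" using True by (simp add: K_def khat_def S_def A_def)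
    have finS: "finite S" by (simp add: S_def)
    have lamS: "lam \<in> S" using True assms(3) by (simp add: S_def)
    have KinS: "K \<in> S" using KS finS lamS Max_in by blast
    have Kge: "x \<in> S \<Longrightarrow> x \<le> K" for x using KS finS by simp
    have Klam: "lam \<le> K" "K \<le> m" using KinS by (auto simp: S_def)
    have AK: "\<forall>k'\<in>{lam..K}. A k'" using KinS by (simp add: S_def)
    have Gt: "G (\<rho> \<tau>) \<ge> \<tau>"
      using A_iff[of lam] True assms(2,3) mpos by (simp add: Gc \<tau>_def divide_simps)
    have U1: "Ufun \<rho> \<tau> G = Inf {u \<in> {\<tau>..1}. G (\<rho> u) \<le> u}" using Gt by (simp add: Ufun_def)
    have m1: "0 < 1 / real m" using mpos by simp
    have "\<tau> \<le> G (\<rho> \<tau>) + 1 / real m" using Gt m1 by linarith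
    then have Ht: "H (\<rho> \<tau>) \<ge> \<tau>" using \<tau>le by (simp add: H_def)
    have U2: "Ufun \<rho> \<tau> H = Inf {u \<in> {\<tau>..1}. H (\<rho> u) \<le> u}" using Ht by (simp add: Ufun_def)
    have Km1: "real K / real m \<le> 1" "real K / real m \<ge> \<tau>"
      using Klam mpos by (auto simp: \<tau>_def divide_simps)
    have "real K / real m \<in> {u \<in> {\<tau>..1}. G (\<rho> u) \<le> u}"
    proof -
      have "G (\<rho> (real K / real m)) \<le> real K / real m"
      proof (cases "K = m")
        case True then show ?thesis using G1 mpos by simp
      next
        case False
        have "\<not> A (K+1)"
        proof
          assume "A (K+1)"
          then have "K+1 \<in> S" using AK False Klam by (auto simp: S_def le_Suc_eq)
          then show False using Kge by fastforce
        qed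
        then have "\<not> K+1 \<le> c (\<rho> (real (K+1) / real m))" using A_iff[of "K+1"] False Klam by simp
        then have "c (\<rho> (real (K+1) / real m)) \<le> K" by simp
        moreover have "c (\<rho> (real K / real m)) \<le> c (\<rho> (real (K+1) / real m))"
          using False Klam mpos by (intro gmono) (auto simp: divide_simps)
        ultimately show ?thesis using mpos by (simp add: Gc divide_simps)
      qed
      then show ?thesis using Km1 by simp
    qed
    then have P1: "Ufun \<rho> \<tau> G \<le> real K / real m"
      unfolding U1 by (intro cInf_lower) (auto intro: bdd_belowI[of _ \<tau>])
    have P2: "real K / real m \<le> Ufun \<rho> \<tau> H"
      unfolding U2
    proof (rule cInf_greatest)
      show "{u \<in> {\<tau>..1}. H (\<rho> u) \<le> u} \<noteq> {}" using \<tau>le by (auto intro!: exI[of _ 1] simp: H_def)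
    next
      fix u assume u: "u \<in> {u \<in> {\<tau>..1}. H (\<rho> u) \<le> u}"
      show "real K / real m \<le> u"
      proof (rule ccontr)
        assume "\<not> real K / real m \<le> u"
        then have uK: "real m * u < real K" using mpos by (simp add: divide_simps mult.commute)
        have u0: "0 \<le> u" using u \<tau>le by auto
        define j where "j = nat \<lfloor>real m * u\<rfloor>"
        have j1: "real j \<le> real m * u" "real m * u < real j + 1"
          using u0 mpos unfolding j_def by (auto simp: of_nat_nat)
        have "real lam \<le> real m * u" using u mpos by (simp add: \<tau>_def divide_simps mult.commute)
        then have jl: "lam \<le> j" using j1 nat_lt by linarith
        have jK: "j < K" using j1 uK by linarith
        have "A j" using AK jl jK by simp
        then have "j \<le> c (\<rho> (real j / real m))" using A_iff[of j] jl jK Klam assms(2) by simp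
        also have "\<dots> \<le> c (\<rho> u)" using j1 mpos u by (intro gmono) (auto simp: divide_simps mult.commute)
        finally have "real j \<le> real (c (\<rho> u))" by simp
        then have "u * real m < real (c (\<rho> u)) + 1" using j1 by (simp add: mult.commute)
        then have "G (\<rho> u) + 1 / real m > u" using mpos by (simp add: Gc divide_simps)
        moreover have "real m * u < real m * 1" using uK Klam by simp
        then have "u < 1" using mpos mult_less_cancel_left_pos by blast
        ultimately have "H (\<rho> u) > u" by (simp add: H_def)
        then show False using u by simp
      qed
    qed
    show ?thesis using P1 P2 by (simp add: G_def H_def \<tau>_def K_def)
  next
    case False
    define S where "S = {k \<in> {0..lam}. A k}"
    have KS: "K = Max S" using False by (simp add: K_def khat_def S_def A_def)
    have finS: "finite S" by (simp add: S_def)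
    have S0: "0 \<in> S" using A0 by (simp add: S_def)
    have KinS: "K \<in> S" using KS finS S0 Max_in by blast
    have Kge: "x \<in> S \<Longrightarrow> x \<le> K" for x using KS finS by simp
    have Klam: "K \<le> lam" "A K" using KinS by (auto simp: S_def)
    have Gt: "\<not> G (\<rho> \<tau>) \<ge> \<tau>"
      using A_iff[of lam] False assms(2,3) mpos by (simp add: Gc \<tau>_def divide_simps)
    have U1: "Ufun \<rho> \<tau> G = Sup {u \<in> {0..\<tau>}. G (\<rho> u) \<ge> u}" using Gt by (simp add: Ufun_def)
    have Km: "real K / real m \<le> \<tau>" "0 \<le> real K / real m"
      using Klam mpos by (auto simp: \<tau>_def divide_simps)
    have P1: "Ufun \<rho> \<tau> G \<le> real K / real m"
      unfolding U1
    proof (rule cSup_least)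
      show "{u \<in> {0..\<tau>}. G (\<rho> u) \<ge> u} \<noteq> {}" using \<tau>le G0 by (auto intro!: exI[of _ 0])
    next
      fix u assume u: "u \<in> {u \<in> {0..\<tau>}. G (\<rho> u) \<ge> u}"
      show "u \<le> real K / real m"
      proof (rule ccontr)
        assume "\<not> u \<le> real K / real m"
        then have uK: "real m * u > real K" using mpos by (simp add: divide_simps mult.commute)
        have u0: "0 \<le> u" using u by auto
        define j where "j = nat \<lceil>real m * u\<rceil>"
        have j1: "real m * u \<le> real j" "real j < real m * u + 1"
          using u0 mpos unfolding j_def by (auto simp: of_nat_nat) linarith+
        have "real m * u \<le> real lam" using u mpos by (simp add: \<tau>_def divide_simps mult.commute)
        then have jl: "j \<le> lam" using j1 nat_lt by linarith
        have jK: "K < j" using j1 uK by linarith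
        have gu: "real m * u \<le> real (c (\<rho> u))" using u mpos by (simp add: Gc divide_simps mult.commute)
        have "c (\<rho> u) \<le> c (\<rho> (real j / real m))"
          using j1 mpos u jl assms(3) by (intro gmono) (auto simp: divide_simps mult.commute)
        then have "real j < real (c (\<rho> (real j / real m))) + 1" using gu j1 by linarith
        then have "j \<le> c (\<rho> (real j / real m))" using nat_lt by blast
        then have "A j" using A_iff[of j] jl jK assms(3) by simp
        then have "j \<in> S" using jl by (simp add: S_def)
        then show False using Kge jK by fastforce
      qed
    qed
    have P2: "real K / real m \<le> Ufun \<rho> \<tau> H"
    proof (cases "H (\<rho> \<tau>) \<ge> \<tau>")
      case True
      then have U2: "Ufun \<rho> \<tau> H = Inf {u \<in> {\<tau>..1}. H (\<rho> u) \<le> u}" by (simp add: Ufun_def)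
      have "\<tau> \<le> Inf {u \<in> {\<tau>..1}. H (\<rho> u) \<le> u}"
        by (rule cInf_greatest) (use \<tau>le in \<open>auto intro!: exI[of _ 1] simp: H_def\<close>)
      then show ?thesis using U2 Km by simp
    next
      case False
      then have U2: "Ufun \<rho> \<tau> H = Sup {u \<in> {0..\<tau>}. H (\<rho> u) \<ge> u}" by (simp add: Ufun_def)
      have "H (\<rho> (real K / real m)) \<ge> real K / real m"
      proof (cases "K = 0")
        case True then show ?thesis using G0 by (simp add: H_def)
      next
        case False
        then have "K \<le> c (\<rho> (real K / real m))" using A_iff[of K] Klam assms(3) by simp
        then have "G (\<rho> (real K / real m)) \<ge> real K / real m" using mpos by (simp add: Gc divide_simps)
        moreover have "real K / real m \<le> 1" using Km \<tau>le by simp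
        moreover have "0 \<le> 1 / real m" by simp
        ultimately have "real K / real m \<le> G (\<rho> (real K / real m)) + 1 / real m" "real K / real m \<le> 1" by linarith+
        then show ?thesis by (simp add: H_def)
      qed
      then have "real K / real m \<in> {u \<in> {0..\<tau>}. H (\<rho> u) \<ge> u}" using Km by simp
      then have "real K / real m \<le> Sup {u \<in> {0..\<tau>}. H (\<rho> u) \<ge> u}"
        by (intro cSup_upper) (auto intro: bdd_aboveI[of _ \<tau>])
      then show ?thesis using U2 by simp
    qed
    show ?thesis using P1 P2 by (simp add: G_def H_def \<tau>_def K_def)
  qed
qed

end
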